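(* Consider the LPE-BC with COF with $K=2$ users and $Q\ge1$ layers, and assume $\Pr[N_u\ge q]>0$ for all $u\in\{1,2\}$, $q\in\{1,\dots,Q\}$. The following region is achievable: the set of $(R_1,R_2)$ for which there exist $R_{u,q}\ge0$ ($u\in\{1,2\}$, $q\in\{1,\dots,Q\}$) with $R_u=\sum_{q=1}^Q R_{u,q}$ and $\max_{q}v_q\le1$, where $$v_q=\max\Big(\frac{R_{1,q}}{\Pr[M\ge q]}+\frac{R_{2,q}}{\Pr[N_2\ge q]},\ \frac{R_{1,q}}{\Pr[N_1\ge q]}+\frac{R_{2,q}}{\Pr[M\ge q]}\Big).$$
   Context: LPE-BC with COF: fix integers $K$ (users) and $Q$ (layers) and a finite field $\mathcal{X}$. In each slot $t$ the transmitter sends $X_t=(X_{1,t},\dots,X_{Q,t})\in\mathcal{X}^Q$; a random state $N_t=(N_{1,t},\dots,N_{K,t})\in\{0,\dots,Q\}^K$, i.i.d. across slots with arbitrary fixed joint law of $(N_1,\dots,N_K)$, gives user $k$ the output $Y_{k,t}=(X_{1,t},\dots,X_{N_{k,t},t})$ (an erasure symbol if $N_{k,t}=0$). A length-$n$ code with rates $(R_1,\dots,R_K)$ (packets per slot) has independent uniform messages $W_k$ with $|\mathcal{X}|^{nR_k}$ values, encoders $X_t=f_t(W_1,\dots,W_K,N_1,\dots,N_{t-1})$ (feedback), and decoders $\hat W_k=\mathrm{dec}_k(Y_k^n,N_1,\dots,N_n)$; a rate tuple is achievable if error probability $\Pr[\exists k:\hat W_k\ne W_k]\to0$; the capacity region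 is the convex closure of achievable tuples. Notation: $M:=\max(N_1,N_2)$. *)

theory Defs
  imports "HOL-Analysis.Analysis" "HOL-Probability.Probability"
begin

(* Users are indexed by 1..K, layers by 1..Q, slots by 0..n-1.
   A channel state is a function  s :: nat => nat  with  s k = N_k  for users k in {1..K}
   (and s k = 0 for k outside {1..K}).  Its law is a pmf  P.
   A channel input in one slot is  x :: nat => 'f  (x q = X_q, only q in {1..Q} is ever observed). *)

definition valid_state_law :: "nat \<Rightarrow> nat \<Rightarrow> (nat \<Rightarrow> nat) pmf \<Rightarrow> bool" where
  "valid_state_law K Q P \<longleftrightarrow>
     (\<forall>s\<in>set_pmf P. (\<forall>k\<in>{1..K}. s k \<le> Q) \<and> (\<forall>k. k \<notin> {1..K} \<longrightarrow> s k = 0))"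

definition num_msgs :: "'f::{finite,field} itself \<Rightarrow> nat \<Rightarrow> real \<Rightarrow> nat" where
  "num_msgs TYPE('f) n r = nat \<lceil>real (card (UNIV::'f set)) powr (real n * r)\<rceil>"

definition msg_set :: "'f::{finite,field} itself \<Rightarrow> nat \<Rightarrow> nat \<Rightarrow> (nat \<Rightarrow> real) \<Rightarrow> (nat \<Rightarrow> nat) set" where
  "msg_set TYPE('f) K n R = (\<Pi>\<^sub>E k\<in>{1..K}. {..<num_msgs TYPE('f) n (R k)})"

definition past :: "nat \<Rightarrow> (nat \<Rightarrow> 'a) \<Rightarrow> 'a \<Rightarrow> (nat \<Rightarrow> 'a)" where
  "past t xs d = (\<lambda>t'. if t' < t then xs t' else d)"

(* Encoder:  enc t w ns_past  gives X_t from all messages and the states of slots < t.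
   Channel input sequence: *)
definition chan_input ::
  "(nat \<Rightarrow> (nat \<Rightarrow> nat) \<Rightarrow> (nat \<Rightarrow> (nat \<Rightarrow> nat)) \<Rightarrow> (nat \<Rightarrow> 'f))
   \<Rightarrow> (nat \<Rightarrow> nat) \<Rightarrow> (nat \<Rightarrow> (nat \<Rightarrow> nat)) \<Rightarrow> nat \<Rightarrow> (nat \<Rightarrow> 'f)" where
  "chan_input enc w ns t = enc t w (past t ns (\<lambda>_. 0))"

(* Output of user k in slot t: the first N_{k,t} layers (None = not received / erasure) *)
definition chan_output ::
  "(nat \<Rightarrow> (nat \<Rightarrow> nat) \<Rightarrow> (nat \<Rightarrow> (nat \<Rightarrow> nat)) \<Rightarrow> (nat \<Rightarrow> 'f))
   \<Rightarrow> (nat \<Rightarrow> nat) \<Rightarrow> (nat \<Rightarrow> (nat \<Rightarrow> nat)) \<Rightarrow> nat \<Rightarrow> nat \<Rightarrow> (nat \<Rightarrow> 'f option)" where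
  "chan_output enc w ns k t =
     (\<lambda>q. if 1 \<le> q \<and> q \<le> ns t k then Some (chan_input enc w ns t q) else None)"

(* Decoder:  dec k Y_k^n N^n  (both sequences restricted to slots 0..n-1).
   Error probability with uniform independent messages and i.i.d. states: *)
definition error_prob ::
  "'f::{finite,field} itself \<Rightarrow> nat \<Rightarrow> (nat \<Rightarrow> nat) pmf \<Rightarrow> nat \<Rightarrow> (nat \<Rightarrow> real)
   \<Rightarrow> (nat \<Rightarrow> (nat \<Rightarrow> nat) \<Rightarrow> (nat \<Rightarrow> (nat \<Rightarrow> nat)) \<Rightarrow> (nat \<Rightarrow> 'f))
   \<Rightarrow> (nat \<Rightarrow> (nat \<Rightarrow> (nat \<Rightarrow> 'f option)) \<Rightarrow> (nat \<Rightarrow> (nat \<Rightarrow> nat)) \<Rightarrow> nat) \<Rightarrow> real" where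
  "error_prob TYPE('f) K P n R enc dec =
     (\<Sum>w\<in>msg_set TYPE('f) K n R.
        measure_pmf.prob (Pi_pmf {..<n} (\<lambda>_. 0) (\<lambda>_. P))
          {ns. \<exists>k\<in>{1..K}.
                 dec k (past n (chan_output enc w ns k) (\<lambda>_. None)) (past n ns (\<lambda>_. 0)) \<noteq> w k})
     / real (card (msg_set TYPE('f) K n R))"

definition achievable ::
  "'f::{finite,field} itself \<Rightarrow> nat \<Rightarrow> (nat \<Rightarrow> nat) pmf \<Rightarrow> (nat \<Rightarrow> real) \<Rightarrow> bool" where
  "achievable TYPE('f) K P R \<longleftrightarrow>
     (\<forall>k. k \<notin> {1..K} \<longrightarrow> R k = 0) \<and>
     (\<exists>enc dec. (\<lambda>n. error_prob TYPE('f) K P n R (enc n) (dec n)) \<longlonglongrightarrow> 0)"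

(* convex closure (closure of the convex hull) of a set of K-tuples, K-tuples being
   functions nat => real vanishing outside {1..K}; topology = Euclidean on coordinates 1..K *)
definition convex_closure_K :: "nat \<Rightarrow> (nat \<Rightarrow> real) set \<Rightarrow> (nat \<Rightarrow> real) set" where
  "convex_closure_K K A = {R. (\<forall>k. k \<notin> {1..K} \<longrightarrow> R k = 0) \<and>
     (\<forall>\<epsilon>>0. \<exists>(m::nat) c r. (\<forall>i<m. c i \<ge> 0 \<and> r i \<in> A) \<and> (\<Sum>i<m. c i) = 1 \<and>
        (\<forall>k\<in>{1..K}. \<bar>R k - (\<Sum>i<m. c i * r i k)\<bar> < \<epsilon>))}"

definition capacity_region :: "'f::{finite,field} itself \<Rightarrow> nat \<Rightarrow> (nat \<Rightarrow> nat) pmf \<Rightarrow> (nat \<Rightarrow> real) set" where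
  "capacity_region TYPE('f) K P = convex_closure_K K {R. achievable TYPE('f) K P R}"

end

theory Submission
  imports Defs
begin

lemma margins:
  fixes p1 p2 p12 r1 r2 \<delta> pm \<beta> \<eta> \<alpha>1 \<alpha>2 \<alpha>3 :: real
  assumes p: "0 < p1" "p1 \<le> p12" "p12 \<le> 1" "0 < p2" "p2 \<le> p12"
    and r: "r1 \<ge> 0" "r2 \<ge> 0" and d: "\<delta> > 0"
    and c: "r1 / p1 + r2 / p12 \<le> 1 - \<delta>"
    and defs: "pm = min p1 p2" "\<beta> = \<delta> * pm / 8" "\<eta> = \<beta> * pm / 4"
       "\<alpha>1 = r1 / p12 + \<beta>" "\<alpha>2 = r2 / p12 + \<beta>" "\<alpha>3 = 1 - \<alpha>1 - \<alpha>2"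
  shows "\<eta> > 0" "\<alpha>1 \<ge> 0" "\<alpha>3 \<ge> 0" "\<alpha>1 * p12 - r1 - \<eta> > 0"
     "\<alpha>3 * p1 - \<alpha>1 * (p12 - p1) - 2 * \<eta> > 0"
proof -
  have pm: "0 < pm" "pm \<le> p1" "pm \<le> 1" using p defs(1) by auto
  have b: "\<beta> > 0" "\<beta> \<le> \<delta> * p1 / 8"
  proof -
    show "\<beta> > 0" unfolding defs(2) using pm d by simp
    show "\<beta> \<le> \<delta> * p1 / 8" unfolding defs(2) using pm d by (intro divide_right_mono mult_left_mono) auto
  qed
  have e: "\<eta> > 0" "\<eta> \<le> \<beta> / 4"
  proof -
    show "\<eta> > 0" unfolding defs(3) using b pm by simp
    have "\<beta> * pm \<le> \<beta> * 1" using pm b by (intro mult_left_mono) auto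
    then show "\<eta> \<le> \<beta> / 4" using defs(3) by simp
  qed
  then show "\<eta> > 0" by simp
  have p12: "p12 > 0" using p by simp
  have a1p: "\<alpha>1 * p12 = r1 + \<beta> * p12" using defs(4) p12 by (simp add: field_simps)
  have a2p: "\<alpha>2 * p1 = r2 * p1 / p12 + \<beta> * p1" unfolding defs(5) by (simp add: distrib_right)
  show a1: "\<alpha>1 \<ge> 0" using defs(4) r p12 b by auto
  show "\<alpha>1 * p12 - r1 - \<eta> > 0"
  proof -
    have "\<beta> * pm \<le> \<beta> * p12" using pm p b by (intro mult_left_mono) auto
    moreover have "\<beta> * pm / 4 < \<beta> * pm" using b pm by simp
    ultimately have "\<eta> < \<beta> * p12" using defs(3) by linarith
    then show ?thesis using a1p by simp
  qed
  have cc: "r1 + r2 * p1 / p12 \<le> p1 - p1 * \<delta>"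
  proof -
    have "p1 * (r1 / p1 + r2 / p12) \<le> p1 * (1 - \<delta>)" using c p by (intro mult_left_mono) auto
    moreover have "p1 * (r1 / p1 + r2 / p12) = r1 + r2 * p1 / p12" using p by (simp add: field_simps)
    moreover have "p1 * (1 - \<delta>) = p1 - p1 * \<delta>" by (simp add: algebra_simps)
    ultimately show ?thesis by linarith
  qed
  have bb: "\<beta> * p12 \<le> \<beta>" "\<beta> * p1 \<le> \<beta>" using b p by (auto intro: mult_left_le)
  have key: "\<alpha>3 * p1 - \<alpha>1 * (p12 - p1) - 2 * \<eta> = p1 - \<alpha>1 * p12 - \<alpha>2 * p1 - 2 * \<eta>"
    unfolding defs(6) by (simp add: algebra_simps)
  have pos: "p1 * \<delta> > 0" using p d by simp
  show g: "\<alpha>3 * p1 - \<alpha>1 * (p12 - p1) - 2 * \<eta> > 0"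
    using key a1p a2p cc bb b e pos mult.commute[of \<delta> p1] by linarith
  show "\<alpha>3 \<ge> 0"
  proof -
    have "\<alpha>1 * (p12 - p1) \<ge> 0" using a1 p by simp
    then have "\<alpha>3 * p1 > 0" using g e by linarith
    then show ?thesis using p zero_less_mult_pos2 by (metis less_eq_real_def)
  qed
qed

lemma floor_bounds:
  fixes x :: real assumes "x \<ge> 0"
  shows "x - 1 \<le> real (nat \<lfloor>x\<rfloor>)" "real (nat \<lfloor>x\<rfloor>) \<le> x"
  using assms by linarith+

lemma ceil_bound:
  fixes x :: real assumes "x \<ge> 0"
  shows "real (nat \<lceil>x\<rceil>) \<le> x + 1" "x \<le> real (nat \<lceil>x\<rceil>)"
  using assms by linarith+

lemma det_user:
  fixes nn L1 L3 k1 cA cD cC p12 p1 d1 \<alpha>1 \<alpha>3 r1 \<eta> :: real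
  assumes "nn * \<alpha>1 - 1 \<le> L1" "L1 \<le> nn * \<alpha>1" "nn * \<alpha>3 - 1 \<le> L3" "k1 \<le> nn * r1 + 1"
    and "L1 * p12 - nn * \<eta> < cA" "cD < L1 * d1 + nn * \<eta>" "L3 * p1 - nn * \<eta> < cC"
    and "d1 \<ge> 0" "p12 \<ge> 0" "p1 \<ge> 0"
    and "nn * (\<alpha>1 * p12 - r1 - \<eta>) \<ge> 1 + p12" "nn * (\<alpha>3 * p1 - \<alpha>1 * d1 - 2 * \<eta>) \<ge> p1"
  shows "k1 \<le> cA" "cD \<le> cC"
proof -
  have e1: "nn * \<alpha>1 * p12 - p12 \<le> L1 * p12"
    using mult_right_mono[of "nn * \<alpha>1 - 1" L1 p12] assms(1,9) by (simp add: left_diff_distrib)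
  have e2: "nn * \<alpha>1 * p12 - nn * r1 - nn * \<eta> \<ge> 1 + p12"
    using assms(11) by (simp add: right_diff_distrib mult.assoc)
  from e1 e2 assms(4,5) show "k1 \<le> cA" by linarith
  have e3: "L1 * d1 \<le> nn * \<alpha>1 * d1" using assms(2,8) by (intro mult_right_mono) auto
  have e4: "nn * \<alpha>3 * p1 - p1 \<le> L3 * p1"
    using mult_right_mono[of "nn * \<alpha>3 - 1" L3 p1] assms(3,10) by (simp add: left_diff_distrib)
  have e5: "nn * \<alpha>3 * p1 - nn * \<alpha>1 * d1 - 2 * (nn * \<eta>) \<ge> p1"
    using assms(12) by (simp add: right_diff_distrib mult.assoc mult.left_commute)
  from e3 e4 e5 assms(6,7) show "cD \<le> cC" by linarith
qed

lemma eventually_lin: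
  fixes m c :: real assumes "m > 0"
  shows "eventually (\<lambda>n. c \<le> real n * m) sequentially"
proof -
  have "eventually (\<lambda>n. nat \<lceil>c / m\<rceil> \<le> n) sequentially" by (rule eventually_ge_at_top)
  then show ?thesis
  proof (rule eventually_mono)
    fix n assume "nat \<lceil>c / m\<rceil> \<le> n"
    then have "c / m \<le> real n" by linarith
    then show "c \<le> real n * m" using assms by (simp add: field_simps)
  qed
qed

lemma exp_lim:
  fixes c :: real assumes "c > 0"
  shows "(\<lambda>n. 2 * exp (- 2 * (real n * c)\<^sup>2 / real n)) \<longlonglongrightarrow> 0"
proof -
  have f0: "filterlim (\<lambda>n. (2 * c\<^sup>2) * real n) at_top sequentially"
    by (rule filterlim_tendsto_pos_mult_at_top[OF tendsto_const]) (use assms in \<open>auto intro: filterlim_real_sequentially\<close>)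
  have f: "filterlim (\<lambda>n. real n * (2 * c\<^sup>2)) at_top sequentially"
    using f0 by (simp add: mult.commute)
  have "((\<lambda>n. exp (- (real n * (2 * c\<^sup>2)))) \<longlongrightarrow> 0) sequentially"
    using filterlim_compose[OF exp_at_bot iffD1[OF filterlim_uminus_at_top f]] by simp
  then have "(\<lambda>n. 2 * exp (- (real n * (2 * c\<^sup>2)))) \<longlonglongrightarrow> 0"
    using tendsto_mult[OF tendsto_const[of 2]] by fastforce
  moreover have "eventually (\<lambda>n. 2 * exp (- (real n * (2 * c\<^sup>2))) = 2 * exp (- 2 * (real n * c)\<^sup>2 / real n)) sequentially"
    using eventually_gt_at_top[of 0]
  proof (rule eventually_mono)
    fix n :: nat assume n: "0 < n"
    have "- 2 * (real n * c)\<^sup>2 / real n = - (real n * (2 * c\<^sup>2))"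
      using n by (simp add: power2_eq_square)
    then show "2 * exp (- (real n * (2 * c\<^sup>2))) = 2 * exp (- 2 * (real n * c)\<^sup>2 / real n)" by simp
  qed
  ultimately show ?thesis by (rule Lim_transform_eventually)
qed

definition cntr :: "nat \<Rightarrow> (nat \<Rightarrow> bool) \<Rightarrow> nat \<Rightarrow> nat" where
  "cntr s r t = card {t'\<in>{s..<t}. r t'}"

lemma cntr_Suc: "cntr s r (Suc t) = cntr s r t + (if s \<le> t \<and> r t then 1 else 0)"
proof -
  have "{t'\<in>{s..<Suc t}. r t'} = {t'\<in>{s..<t}. r t'} \<union> (if s \<le> t \<and> r t then {t} else {})"
    by (auto simp: less_Suc_eq)
  then show ?thesis unfolding cntr_def by (auto simp: card_insert_if)
qed

lemma cntr_ivt: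
  assumes "j < cntr s r e"
  shows "\<exists>t\<in>{s..<e}. r t \<and> cntr s r t = j"
  using assms
proof (induction e)
  case 0
  then show ?case by (simp add: cntr_def)
next
  case (Suc e)
  show ?case
  proof (cases "j < cntr s r e")
    case True
    then show ?thesis using Suc.IH by auto
  next
    case False
    then have "s \<le> e \<and> r e" and "j = cntr s r e"
      using Suc.prems by (auto simp: cntr_Suc split: if_splits)
    then show ?thesis by auto
  qed
qed

lemma cntr_mono_strict:
  assumes "t < t'" "s \<le> t" "r t"
  shows "cntr s r t < cntr s r t'"
proof -
  have "insert t {x\<in>{s..<t}. r x} \<subseteq> {x\<in>{s..<t'}. r x}" using assms by auto
  then have "card (insert t {x\<in>{s..<t}. r x}) \<le> cntr s r t'"
    unfolding cntr_def by (intro card_mono) auto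
  then show ?thesis unfolding cntr_def by simp
qed

lemma cntr_inj:
  assumes "r t" "r t'" "s \<le> t" "s \<le> t'" "cntr s r t = cntr s r t'"
  shows "t = t'"
  using cntr_mono_strict[of t t' s r] cntr_mono_strict[of t' t s r] assms
  by (cases t t' rule: linorder_cases) auto

lemma cntr_lt_card:
  assumes "r t" "t \<in> {s..<e}"
  shows "cntr s r t < card {x\<in>{s..<e}. r x}"
  using cntr_mono_strict[of t e s r] assms by (simp add: cntr_def)

lemma cntr_cong:
  assumes "\<And>x. x < t \<Longrightarrow> r x = r' x"
  shows "cntr s r t = cntr s r' t"
  unfolding cntr_def using assms by (intro arg_cong[where f=card]) auto

definition Dl :: "nat \<Rightarrow> (nat \<Rightarrow> bool) \<Rightarrow> (nat \<Rightarrow> bool) \<Rightarrow> nat \<Rightarrow> nat \<Rightarrow> bool" where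
  "Dl s r r' k t \<longleftrightarrow> cntr s (\<lambda>x. r x \<or> r' x) t < k \<and> \<not> r t \<and> r' t"

definition Sv :: "nat \<Rightarrow> nat \<Rightarrow> (nat \<Rightarrow> bool) \<Rightarrow> (nat \<Rightarrow> bool) \<Rightarrow> nat \<Rightarrow> (nat \<Rightarrow> 'f::field) \<Rightarrow> nat \<Rightarrow> 'f" where
  "Sv s L r r' k a i = (\<Sum>t\<in>{t\<in>{s..<s+L}. Dl s r r' k t \<and> cntr s (Dl s r r' k) t = i}.
       a (cntr s (\<lambda>x. r x \<or> r' x) t))"

definition phv :: "nat \<Rightarrow> (nat \<Rightarrow> bool) \<Rightarrow> (nat \<Rightarrow> bool) \<Rightarrow> nat \<Rightarrow> (nat \<Rightarrow> 'f::field) \<Rightarrow> nat \<Rightarrow> 'f" where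
  "phv s r r' k a t = (if cntr s (\<lambda>x. r x \<or> r' x) t < k then a (cntr s (\<lambda>x. r x \<or> r' x) t) else 0)"

definition LX :: "nat \<Rightarrow> nat \<Rightarrow> nat \<Rightarrow> nat \<Rightarrow> nat \<Rightarrow> nat \<Rightarrow> (nat \<Rightarrow> bool) \<Rightarrow> (nat \<Rightarrow> bool)
    \<Rightarrow> nat \<Rightarrow> nat \<Rightarrow> (nat \<Rightarrow> 'f::field) \<Rightarrow> (nat \<Rightarrow> 'f) \<Rightarrow> nat \<Rightarrow> 'f" where
  "LX s1 L1 s2 L2 s3 L3 r1 r2 k1 k2 a b t =
    (if t \<in> {s1..<s1+L1} then phv s1 r1 r2 k1 a t
     else if t \<in> {s2..<s2+L2} then phv s2 r2 r1 k2 b t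
     else if t \<in> {s3..<s3+L3} then Sv s1 L1 r1 r2 k1 a (cntr s3 r1 t) + Sv s2 L2 r2 r1 k2 b (cntr s3 r2 t)
     else 0)"

lemma LX_swap:
  assumes "{s1..<s1+L1} \<inter> {s2..<s2+L2} = {}"
  shows "LX s1 L1 s2 L2 s3 L3 r1 r2 k1 k2 a b t = LX s2 L2 s1 L1 s3 L3 r2 r1 k2 k1 b a t"
  using assms unfolding LX_def by (auto simp: add.commute)

lemma Dl_cong:
  assumes "\<And>x. x \<le> t \<Longrightarrow> r x = q x" "\<And>x. x \<le> t \<Longrightarrow> r' x = q' x"
  shows "Dl s r r' k t = Dl s q q' k t"
proof -
  have "cntr s (\<lambda>x. r x \<or> r' x) t = cntr s (\<lambda>x. q x \<or> q' x) t"
    by (rule cntr_cong) (use assms in auto)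
  then show ?thesis unfolding Dl_def using assms by auto
qed

lemma Sv_cong:
  assumes "\<And>x. x < s + L \<Longrightarrow> r x = q x" "\<And>x. x < s + L \<Longrightarrow> r' x = q' x"
  shows "Sv s L r r' k a i = Sv s L q q' k a i"
proof -
  have D: "Dl s r r' k x = Dl s q q' k x" if "x < s + L" for x
    by (rule Dl_cong) (use assms that in auto)
  have S: "{t\<in>{s..<s+L}. Dl s r r' k t \<and> cntr s (Dl s r r' k) t = i}
         = {t\<in>{s..<s+L}. Dl s q q' k t \<and> cntr s (Dl s q q' k) t = i}"
  proof -
    have "cntr s (Dl s r r' k) t = cntr s (Dl s q q' k) t" if "t < s + L" for t
      by (rule cntr_cong) (use D that in auto)
    then show ?thesis using D by auto
  qed
  show ?thesis unfolding Sv_def S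
  proof (rule sum.cong[OF refl])
    fix x assume "x \<in> {t\<in>{s..<s+L}. Dl s q q' k t \<and> cntr s (Dl s q q' k) t = i}"
    then have "x < s + L" by auto
    then have "cntr s (\<lambda>x. r x \<or> r' x) x = cntr s (\<lambda>x. q x \<or> q' x) x"
      by (intro cntr_cong) (use assms in auto)
    then show "a (cntr s (\<lambda>x. r x \<or> r' x) x) = a (cntr s (\<lambda>x. q x \<or> q' x) x)" by simp
  qed
qed

lemma LX_causal:
  assumes "s1 + L1 \<le> s3" "s2 + L2 \<le> s3"
    and "\<And>x. x < t \<Longrightarrow> r1 x = q1 x" "\<And>x. x < t \<Longrightarrow> r2 x = q2 x"
  shows "LX s1 L1 s2 L2 s3 L3 r1 r2 k1 k2 a b t = LX s1 L1 s2 L2 s3 L3 q1 q2 k1 k2 a b t"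
proof -
  have c: "cntr s r t = cntr s q t" if "\<And>x. x < t \<Longrightarrow> r x = q x" for s r q
    by (rule cntr_cong) (use that in auto)
  have c1: "cntr s (\<lambda>x. r1 x \<or> r2 x) t = cntr s (\<lambda>x. q1 x \<or> q2 x) t" for s
    by (rule c) (use assms in auto)
  have c2: "cntr s (\<lambda>x. r2 x \<or> r1 x) t = cntr s (\<lambda>x. q2 x \<or> q1 x) t" for s
    by (rule c) (use assms in auto)
  show ?thesis
  proof (cases "t \<in> {s3..<s3+L3} \<and> t \<notin> {s1..<s1+L1} \<and> t \<notin> {s2..<s2+L2}")
    case True
    have "Sv s1 L1 r1 r2 k1 a i = Sv s1 L1 q1 q2 k1 a i" for i
      by (rule Sv_cong) (use assms True in auto)
    moreover have "Sv s2 L2 r2 r1 k2 b i = Sv s2 L2 q2 q1 k2 b i" for i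
      by (rule Sv_cong) (use assms True in auto)
    moreover have "cntr s3 r1 t = cntr s3 q1 t" "cntr s3 r2 t = cntr s3 q2 t"
      by (rule c; use assms in auto)+
    moreover have mA: "(t \<in> {s1..<s1+L1}) = False" "(t \<in> {s2..<s2+L2}) = False"
        "(t \<in> {s3..<s3+L3}) = True" using True by auto
    ultimately show ?thesis by (simp only: LX_def mA if_False if_True)
  next
    case False
    have p1: "phv s1 r1 r2 k1 a t = phv s1 q1 q2 k1 a t" unfolding phv_def using c1 by simp
    have p2: "phv s2 r2 r1 k2 b t = phv s2 q2 q1 k2 b t" unfolding phv_def using c2 by simp
    show ?thesis unfolding LX_def using False by (auto simp: p1 p2)
  qed
qed

lemma LX_decode:
  fixes a b a' b' :: "nat \<Rightarrow> 'f::field"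
  assumes disj: "{s1..<s1+L1} \<inter> {s2..<s2+L2} = {}"
    and o1: "s1 + L1 \<le> s3" and o2: "s2 + L2 \<le> s3" and o3: "s3 + L3 \<le> n"
    and cA: "k1 \<le> card {t\<in>{s1..<s1+L1}. r1 t \<or> r2 t}"
    and cC: "card {t\<in>{s1..<s1+L1}. \<not> r1 t \<and> r2 t} \<le> card {t\<in>{s3..<s3+L3}. r1 t}"
    and eq: "\<And>t. t < n \<Longrightarrow> r1 t \<Longrightarrow>
        LX s1 L1 s2 L2 s3 L3 r1 r2 k1 k2 a b t = LX s1 L1 s2 L2 s3 L3 r1 r2 k1 k2 a' b' t"
    and j: "j < k1"
  shows "a j = a' j"
proof -
  let ?X = "LX s1 L1 s2 L2 s3 L3 r1 r2 k1 k2 a b"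
  let ?X' = "LX s1 L1 s2 L2 s3 L3 r1 r2 k1 k2 a' b'"
  let ?rr = "\<lambda>x. r1 x \<or> r2 x"
  let ?D = "Dl s1 r1 r2 k1"
  have "j < cntr s1 ?rr (s1+L1)" using j cA by (simp add: cntr_def)
  then obtain t where t: "t \<in> {s1..<s1+L1}" "?rr t" "cntr s1 ?rr t = j"
    using cntr_ivt by blast
  have tn: "t < n" using t o1 o3 by auto
  have Xt: "?X t = a j" "?X' t = a' j" using t j unfolding LX_def phv_def by auto
  show ?thesis
  proof (cases "r1 t")
    case True
    then show ?thesis using eq[OF tn True] Xt by simp
  next
    case False
    have Dt: "?D t" using False t j by (simp add: Dl_def)
    define i where "i = cntr s1 ?D t"
    have "i < card {x\<in>{s1..<s1+L1}. ?D x}"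
      unfolding i_def by (rule cntr_lt_card[of ?D t s1 "s1+L1", OF Dt t(1)])
    also have "\<dots> \<le> card {t\<in>{s1..<s1+L1}. \<not> r1 t \<and> r2 t}"
      by (intro card_mono) (auto simp: Dl_def)
    also have "\<dots> \<le> cntr s3 r1 (s3+L3)" using cC by (simp add: cntr_def)
    finally obtain t3 where t3: "t3 \<in> {s3..<s3+L3}" "r1 t3" "cntr s3 r1 t3 = i"
      using cntr_ivt by blast
    have t3n: "t3 < n" using t3 o3 by auto
    have nA: "t3 \<notin> {s1..<s1+L1}" "t3 \<notin> {s2..<s2+L2}" using t3 o1 o2 by auto
    have Sset: "{x\<in>{s1..<s1+L1}. ?D x \<and> cntr s1 ?D x = i} = {t}"
    proof (rule set_eqI, rule iffI)
      fix x assume x: "x \<in> {x\<in>{s1..<s1+L1}. ?D x \<and> cntr s1 ?D x = i}"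
      then have "x = t" using cntr_inj[of ?D x t s1] Dt t(1) unfolding i_def by auto
      then show "x \<in> {t}" by simp
    next
      fix x assume "x \<in> {t}"
      then show "x \<in> {x\<in>{s1..<s1+L1}. ?D x \<and> cntr s1 ?D x = i}" using t Dt i_def by auto
    qed
    have SA: "Sv s1 L1 r1 r2 k1 c i = c j" for c :: "nat \<Rightarrow> 'f"
      unfolding Sv_def Sset using t(3) by simp
    have SB: "Sv s2 L2 r2 r1 k2 b m = Sv s2 L2 r2 r1 k2 b' m" for m
      unfolding Sv_def
    proof (rule sum.cong[OF refl])
      fix x assume x: "x \<in> {t \<in> {s2..<s2 + L2}. Dl s2 r2 r1 k2 t \<and> cntr s2 (Dl s2 r2 r1 k2) t = m}"
      then have xB: "x \<in> {s2..<s2+L2}" and Dx: "Dl s2 r2 r1 k2 x" by auto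
      have xA: "x \<notin> {s1..<s1+L1}" using xB disj by auto
      have xn: "x < n" using xB o2 o3 by auto
      have r1x: "r1 x" using Dx by (simp add: Dl_def)
      have "?X x = b (cntr s2 (\<lambda>x. r2 x \<or> r1 x) x)" "?X' x = b' (cntr s2 (\<lambda>x. r2 x \<or> r1 x) x)"
        using xA xB Dx unfolding LX_def phv_def Dl_def by auto
      then show "b (cntr s2 (\<lambda>x. r2 x \<or> r1 x) x) = b' (cntr s2 (\<lambda>x. r2 x \<or> r1 x) x)"
        using eq[OF xn r1x] by simp
    qed
    have mA: "(t3 \<in> {s1..<s1+L1}) = False" "(t3 \<in> {s2..<s2+L2}) = False"
        "(t3 \<in> {s3..<s3+L3}) = True" using nA t3 by auto
    have "?X t3 = a j + Sv s2 L2 r2 r1 k2 b (cntr s3 r2 t3)"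
      using t3 SA by (simp only: LX_def mA if_False if_True)
    moreover have "?X' t3 = a' j + Sv s2 L2 r2 r1 k2 b (cntr s3 r2 t3)"
      using t3 SA SB by (simp only: LX_def mA if_False if_True)
    ultimately show ?thesis using eq[OF t3n t3(2)] by simp
  qed
qed

lemma map_pmf_indicator_bernoulli:
  "map_pmf (\<lambda>s. s \<in> A) P = bernoulli_pmf (measure_pmf.prob P A)"
proof (rule pmf_eqI)
  fix b :: bool
  have p01: "measure_pmf.prob P A \<in> {0..1}" by auto
  show "pmf (map_pmf (\<lambda>s. s \<in> A) P) b = pmf (bernoulli_pmf (measure_pmf.prob P A)) b"
  proof (cases b)
    case True
    have "(\<lambda>s. s \<in> A) -` {True} = A" by auto
    then show ?thesis using True p01 by (simp add: pmf_map)
  next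
    case False
    have "(\<lambda>s. s \<in> A) -` {False} = - A" by auto
    moreover have "measure_pmf.prob P (- A) = 1 - measure_pmf.prob P A"
      using measure_pmf.prob_compl[of A P] by (simp add: Compl_eq_Diff_UNIV)
    ultimately show ?thesis using False p01
      by (simp add: pmf_map)
  qed
qed

lemma count_binomial:
  fixes n :: nat
  assumes T: "T \<subseteq> {..<n}"
  shows "map_pmf (\<lambda>ns. card {t\<in>T. ns t \<in> A}) (Pi_pmf {..<n} d (\<lambda>_. P))
         = binomial_pmf (card T) (measure_pmf.prob P A)"
proof -
  let ?p = "measure_pmf.prob P A"
  let ?B = "Pi_pmf {..<n} (d \<in> A) (\<lambda>_. bernoulli_pmf ?p)"
  have finT: "finite T" by (rule finite_subset[OF T]) simp
  have e1: "map_pmf (\<lambda>ns t. ns t \<in> A) (Pi_pmf {..<n} d (\<lambda>_. P)) = ?B"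
  proof -
    have "Pi_pmf {..<n} (d \<in> A) (\<lambda>_. map_pmf (\<lambda>s. s \<in> A) P)
        = map_pmf ((\<circ>) (\<lambda>s. s \<in> A)) (Pi_pmf {..<n} d (\<lambda>_. P))"
      by (rule Pi_pmf_map) auto
    moreover have "map_pmf ((\<circ>) (\<lambda>s. s \<in> A)) (Pi_pmf {..<n} d (\<lambda>_. P)) = map_pmf (\<lambda>ns t. ns t \<in> A) (Pi_pmf {..<n} d (\<lambda>_. P))"
      by (rule map_pmf_cong) (auto simp: fun_eq_iff)
    ultimately have "map_pmf (\<lambda>ns t. ns t \<in> A) (Pi_pmf {..<n} d (\<lambda>_. P))
       = Pi_pmf {..<n} (d \<in> A) (\<lambda>_. map_pmf (\<lambda>s. s \<in> A) P)" by simp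
    then show ?thesis by (simp only: map_pmf_indicator_bernoulli)
  qed
  have e2: "Pi_pmf T (d \<in> A) (\<lambda>_. bernoulli_pmf ?p)
      = map_pmf (\<lambda>f x. if x \<in> T then f x else (d \<in> A)) ?B"
    by (rule Pi_pmf_subset) (use T in auto)
  have e3: "map_pmf (\<lambda>f. card {t\<in>T. f t}) ?B
     = map_pmf (\<lambda>f. card {t\<in>T. f t}) (map_pmf (\<lambda>f x. if x \<in> T then f x else (d \<in> A)) ?B)"
    unfolding map_pmf_comp by (intro map_pmf_cong refl arg_cong[where f=card]) auto
  have e4: "map_pmf (\<lambda>ns. card {t\<in>T. ns t \<in> A}) (Pi_pmf {..<n} d (\<lambda>_. P))
      = map_pmf (\<lambda>f. card {t\<in>T. f t}) (map_pmf (\<lambda>ns t. ns t \<in> A) (Pi_pmf {..<n} d (\<lambda>_. P)))"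
    unfolding map_pmf_comp by (simp only: o_def)
  have e5: "binomial_pmf (card T) ?p = map_pmf (\<lambda>f. card {t\<in>T. f t}) (Pi_pmf T (d \<in> A) (\<lambda>_. bernoulli_pmf ?p))"
    by (rule binomial_pmf_altdef') (use finT in auto)
  show ?thesis unfolding e4 e1 e3 e5 e2 ..
qed

lemma conc:
  assumes T: "T \<subseteq> {..<n}" and e: "\<epsilon> > 0"
  shows "measure_pmf.prob (Pi_pmf {..<n} d (\<lambda>_. P))
     {ns. \<epsilon> \<le> \<bar>real (card {t\<in>T. ns t \<in> A}) - real (card T) * measure_pmf.prob P A\<bar>}
     \<le> 2 * exp (- 2 * \<epsilon>\<^sup>2 / real n)"
proof (cases "card T = 0")
  case True
  have "T = {}" using True T finite_subset[OF T] by auto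
  then have "{ns. \<epsilon> \<le> \<bar>real (card {t\<in>T. ns t \<in> A}) - real (card T) * measure_pmf.prob P A\<bar>} = {}"
    using e by auto
  then show ?thesis by simp
next
  case False
  have finT: "finite T" by (rule finite_subset[OF T]) simp
  have cT: "card T \<le> n" using card_mono[OF _ T] by simp
  have bd: "binomial_distribution (measure_pmf.prob P A)"
    by unfold_locales auto
  have "measure_pmf.prob (Pi_pmf {..<n} d (\<lambda>_. P))
     {ns. \<epsilon> \<le> \<bar>real (card {t\<in>T. ns t \<in> A}) - real (card T) * measure_pmf.prob P A\<bar>}
     = measure_pmf.prob (map_pmf (\<lambda>ns. card {t\<in>T. ns t \<in> A}) (Pi_pmf {..<n} d (\<lambda>_. P)))
        {x. \<epsilon> \<le> \<bar>real x - real (card T) * measure_pmf.prob P A\<bar>}"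
    by (simp add: measure_map_pmf vimage_def)
  also have "\<dots> = measure_pmf.prob (binomial_pmf (card T) (measure_pmf.prob P A))
        {x. \<epsilon> \<le> \<bar>real x - real (card T) * measure_pmf.prob P A\<bar>}"
    by (simp add: count_binomial[OF T])
  also have "\<dots> \<le> 2 * exp (- 2 * \<epsilon>\<^sup>2 / real (card T))"
    by (rule binomial_distribution.prob_abs_ge[OF bd]) (use False e in auto)
  also have "\<dots> \<le> 2 * exp (- 2 * \<epsilon>\<^sup>2 / real n)"
  proof -
    have "2 * \<epsilon>\<^sup>2 / real n \<le> 2 * \<epsilon>\<^sup>2 / real (card T)"
      using False cT e by (intro divide_left_mono) auto
    then show ?thesis by simp
  qed
  finally show ?thesis .
qed

lemma msg_set_props:
  shows "finite (msg_set TYPE('f::{finite,field}) K n R)" "msg_set TYPE('f) K n R \<noteq> {}"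
proof -
  have c: "real (card (UNIV::'f set)) > 0" using finite_UNIV_card_ge_0 by simp
  have "0 < num_msgs TYPE('f) n r" for r
    unfolding num_msgs_def using c by simp
  then show "msg_set TYPE('f) K n R \<noteq> {}"
    unfolding msg_set_def by (auto simp: PiE_eq_empty_iff)
  show "finite (msg_set TYPE('f) K n R)"
    unfolding msg_set_def by (intro finite_PiE) auto
qed

lemma card_field_ge2: "card (UNIV::'f::{finite,field} set) \<ge> 2"
proof -
  have "card {0::'f, 1} = 2" by simp
  then show ?thesis using card_mono[of "UNIV::'f set" "{0,1}"] by simp
qed

lemma num_msgs_bound:
  assumes "real n * r \<le> real K"
  shows "num_msgs TYPE('f::{finite,field}) n r \<le> card (UNIV::'f set) ^ K"
proof -
  let ?c = "real (card (UNIV::'f set))"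
  have c: "?c \<ge> 2" using card_field_ge2[where 'f='f] by linarith
  have "?c powr (real n * r) \<le> ?c powr (real K)"
    using c assms by (intro powr_mono) auto
  also have "\<dots> = ?c ^ K" using c by (simp add: powr_realpow)
  finally have h: "?c powr (real n * r) \<le> real (card (UNIV::'f set) ^ K)" by simp
  have "\<lceil>?c powr (real n * r)\<rceil> \<le> int (card (UNIV::'f set) ^ K)"
    using h by (simp only: ceiling_le_iff of_int_of_nat_eq)
  then show ?thesis using h unfolding num_msgs_def by simp
qed

lemma dec_u1:
  fixes a b a' b' :: "nat \<Rightarrow> 'f::field"
  assumes n: "L1 + L2 + L3 \<le> n"
    and cA: "k1 \<le> card {t\<in>{0..<L1}. r1 t \<or> r2 t}"
    and cC: "card {t\<in>{0..<L1}. \<not> r1 t \<and> r2 t} \<le> card {t\<in>{L1+L2..<L1+L2+L3}. r1 t}"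
    and eq: "\<And>t. t < n \<Longrightarrow> r1 t \<Longrightarrow>
        LX 0 L1 L1 L2 (L1+L2) L3 r1 r2 k1 k2 a b t = LX 0 L1 L1 L2 (L1+L2) L3 r1 r2 k1 k2 a' b' t"
    and j: "j < k1"
  shows "a j = a' j"
  by (rule LX_decode[where ?s1.0 =0 and ?L1.0 =L1 and ?s2.0 =L1 and ?L2.0 =L2 and ?s3.0 ="L1+L2" and ?L3.0 =L3 and n=n
        and ?r1.0 =r1 and ?r2.0 =r2 and ?k1.0 =k1 and ?k2.0 =k2 and b=b and b'=b'])
     (use assms in auto)

lemma dec_u2:
  fixes a b a' b' :: "nat \<Rightarrow> 'f::field"
  assumes n: "L1 + L2 + L3 \<le> n"
    and cA: "k2 \<le> card {t\<in>{L1..<L1+L2}. r2 t \<or> r1 t}"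
    and cC: "card {t\<in>{L1..<L1+L2}. \<not> r2 t \<and> r1 t} \<le> card {t\<in>{L1+L2..<L1+L2+L3}. r2 t}"
    and eq: "\<And>t. t < n \<Longrightarrow> r2 t \<Longrightarrow>
        LX 0 L1 L1 L2 (L1+L2) L3 r1 r2 k1 k2 a b t = LX 0 L1 L1 L2 (L1+L2) L3 r1 r2 k1 k2 a' b' t"
    and j: "j < k2"
  shows "b j = b' j"
proof -
  have disj: "{0..<0+L1} \<inter> {L1..<L1+L2} = {}" by auto
  note sw = LX_swap[OF disj]
  have eq': "LX L1 L2 0 L1 (L1+L2) L3 r2 r1 k2 k1 b a t = LX L1 L2 0 L1 (L1+L2) L3 r2 r1 k2 k1 b' a' t"
    if "t < n" "r2 t" for t
    using eq[OF that] sw[of "L1+L2" L3 r1 r2 k1 k2 a b t] sw[of "L1+L2" L3 r1 r2 k1 k2 a' b' t] by simp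
  show ?thesis
    by (rule LX_decode[where ?s1.0 =L1 and ?L1.0 =L2 and ?s2.0 =0 and ?L2.0 =L1 and ?s3.0 ="L1+L2" and ?L3.0 =L3 and n=n
        and ?r1.0 =r2 and ?r2.0 =r1 and ?k1.0 =k2 and ?k2.0 =k1 and b=a and b'=a'])
       (use assms eq' in \<open>auto simp: add.commute\<close>)
qed

lemma ach:
  fixes P :: "(nat \<Rightarrow> nat) pmf" and Q :: nat and r :: "nat \<Rightarrow> nat \<Rightarrow> real" and \<delta> :: real
  assumes pos: "\<And>u q. u \<in> {1,2} \<Longrightarrow> q \<in> {1..Q} \<Longrightarrow> measure_pmf.prob P {s. q \<le> s u} > 0"
    and rnn: "\<And>u q. u \<in> {1,2} \<Longrightarrow> q \<in> {1..Q} \<Longrightarrow> r u q \<ge> 0"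
    and d: "\<delta> > 0"
    and c1: "\<And>q. q \<in> {1..Q} \<Longrightarrow> r 1 q / measure_pmf.prob P {s. q \<le> s 1 \<or> q \<le> s 2}
                + r 2 q / measure_pmf.prob P {s. q \<le> s 2} \<le> 1 - \<delta>"
    and c2: "\<And>q. q \<in> {1..Q} \<Longrightarrow> r 1 q / measure_pmf.prob P {s. q \<le> s 1}
                + r 2 q / measure_pmf.prob P {s. q \<le> s 1 \<or> q \<le> s 2} \<le> 1 - \<delta>"
  shows "achievable TYPE('f::{finite,field}) 2 P
     (\<lambda>k. if k = 1 then (\<Sum>q=1..Q. r 1 q) else if k = 2 then (\<Sum>q=1..Q. r 2 q) else 0)"
proof -
  define R' :: "nat \<Rightarrow> real" where
    "R' = (\<lambda>k. if k = 1 then (\<Sum>q=1..Q. r 1 q) else if k = 2 then (\<Sum>q=1..Q. r 2 q) else 0)"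
  define p1 where "p1 q = measure_pmf.prob P {s. q \<le> s 1}" for q
  define p2 where "p2 q = measure_pmf.prob P {s. q \<le> s 2}" for q
  define p12 where "p12 q = measure_pmf.prob P {s. q \<le> s 1 \<or> q \<le> s 2}" for q
  define pm where "pm q = min (p1 q) (p2 q)" for q
  define \<beta> where "\<beta> q = \<delta> * pm q / 8" for q
  define \<eta> where "\<eta> q = \<beta> q * pm q / 4" for q
  define \<alpha>1 where "\<alpha>1 q = r 1 q / p12 q + \<beta> q" for q
  define \<alpha>2 where "\<alpha>2 q = r 2 q / p12 q + \<beta> q" for q
  define \<alpha>3 where "\<alpha>3 q = 1 - \<alpha>1 q - \<alpha>2 q" for q
  define L1 where "L1 n q = nat \<lfloor>real n * \<alpha>1 q\<rfloor>" for n q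
  define L2 where "L2 n q = nat \<lfloor>real n * \<alpha>2 q\<rfloor>" for n q
  define L3 where "L3 n q = nat \<lfloor>real n * \<alpha>3 q\<rfloor>" for n q
  define k where "k u n q = nat \<lceil>real n * r u q\<rceil>" for u n q
  define I where "I u n = Sigma {1..Q} (\<lambda>q. {..<k u n q})" for u n
  define M where "M u n = num_msgs TYPE('f) n (R' u)" for u n
  define emb :: "nat \<Rightarrow> nat \<Rightarrow> nat \<Rightarrow> nat \<times> nat \<Rightarrow> 'f" where
    "emb u n = (SOME f. f ` {..<M u n} \<subseteq> (\<Pi>\<^sub>E x\<in>I u n. (UNIV::'f set)) \<and> inj_on f {..<M u n})" for u n
  define enc :: "nat \<Rightarrow> nat \<Rightarrow> (nat \<Rightarrow> nat) \<Rightarrow> (nat \<Rightarrow> nat \<Rightarrow> nat) \<Rightarrow> nat \<Rightarrow> 'f" where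
    "enc n t w h = (\<lambda>q. LX 0 (L1 n q) (L1 n q) (L2 n q) (L1 n q + L2 n q) (L3 n q)
        (\<lambda>x. q \<le> h x 1) (\<lambda>x. q \<le> h x 2) (k 1 n q) (k 2 n q)
        (\<lambda>j. emb 1 n (w 1) (q, j)) (\<lambda>j. emb 2 n (w 2) (q, j)) t)" for n t w h
  define dec :: "nat \<Rightarrow> nat \<Rightarrow> (nat \<Rightarrow> nat \<Rightarrow> 'f option) \<Rightarrow> (nat \<Rightarrow> nat \<Rightarrow> nat) \<Rightarrow> nat" where
    "dec n kk Y NS = (SOME w'. w' \<in> msg_set TYPE('f) 2 n R'
        \<and> past n (chan_output (enc n) w' NS kk) (\<lambda>_. None) = Y) kk" for n kk Y NS
  define TT where "TT n q = [{0..<L1 n q}, {0..<L1 n q}, {L1 n q..<L1 n q + L2 n q},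
       {L1 n q..<L1 n q + L2 n q}, {L1 n q + L2 n q..<L1 n q + L2 n q + L3 n q},
       {L1 n q + L2 n q..<L1 n q + L2 n q + L3 n q}]" for n q
  define AA :: "nat \<Rightarrow> (nat \<Rightarrow> nat) set list" where
    "AA q = [{s. q \<le> s 1 \<or> q \<le> s 2}, {s. \<not> q \<le> s 1 \<and> q \<le> s 2},
       {s. q \<le> s 1 \<or> q \<le> s 2}, {s. \<not> q \<le> s 2 \<and> q \<le> s 1}, {s. q \<le> s 1}, {s. q \<le> s 2}]" for q
  define dev where "dev n q i ns = \<bar>real (card {t\<in>TT n q ! i. ns t \<in> AA q ! i})
      - real (card (TT n q ! i)) * measure_pmf.prob P (AA q ! i)\<bar>" for n q i and ns :: "nat \<Rightarrow> nat \<Rightarrow> nat"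
  define good where "good n ns \<longleftrightarrow> (\<forall>q\<in>{1..Q}. \<forall>i<6. dev n q i ns < real n * \<eta> q)" for n ns
  define PN where "PN n = Pi_pmf {..<n} (\<lambda>_. 0::nat) (\<lambda>_. P)" for n :: nat

  have pq: "0 < p1 q" "0 < p2 q" "p1 q \<le> p12 q" "p2 q \<le> p12 q" "p12 q \<le> 1" if q: "q \<in> {1..Q}" for q
  proof -
    show "0 < p1 q" "0 < p2 q" unfolding p1_def p2_def using pos q by auto
    show "p1 q \<le> p12 q" "p2 q \<le> p12 q" unfolding p1_def p2_def p12_def
      by (auto intro!: measure_pmf.finite_measure_mono)
    show "p12 q \<le> 1" unfolding p12_def by simp
  qed
  have pd1: "measure_pmf.prob P {s. \<not> q \<le> s 1 \<and> q \<le> s 2} = p12 q - p1 q" for q :: nat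
  proof -
    have "{s::nat\<Rightarrow>nat. q \<le> s 1 \<or> q \<le> s 2} = {s. q \<le> s 1} \<union> {s. \<not> q \<le> s 1 \<and> q \<le> s 2}" by auto
    moreover have "measure_pmf.prob P ({s. q \<le> s 1} \<union> {s. \<not> q \<le> s 1 \<and> q \<le> s 2})
        = measure_pmf.prob P {s. q \<le> s 1} + measure_pmf.prob P {s. \<not> q \<le> s 1 \<and> q \<le> s 2}"
      by (rule measure_pmf.finite_measure_Union) auto
    ultimately have "p12 q = p1 q + measure_pmf.prob P {s. \<not> q \<le> s 1 \<and> q \<le> s 2}"
      unfolding p12_def p1_def by simp
    then show ?thesis by simp
  qed
  have pd2: "measure_pmf.prob P {s. \<not> q \<le> s 2 \<and> q \<le> s 1} = p12 q - p2 q" for q :: nat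
  proof -
    have "{s::nat\<Rightarrow>nat. q \<le> s 1 \<or> q \<le> s 2} = {s. q \<le> s 2} \<union> {s. \<not> q \<le> s 2 \<and> q \<le> s 1}" by auto
    moreover have "measure_pmf.prob P ({s. q \<le> s 2} \<union> {s. \<not> q \<le> s 2 \<and> q \<le> s 1})
        = measure_pmf.prob P {s. q \<le> s 2} + measure_pmf.prob P {s. \<not> q \<le> s 2 \<and> q \<le> s 1}"
      by (rule measure_pmf.finite_measure_Union) auto
    ultimately have "p12 q = p2 q + measure_pmf.prob P {s. \<not> q \<le> s 2 \<and> q \<le> s 1}"
      unfolding p12_def p2_def by simp
    then show ?thesis by simp
  qed
  have rq: "r 1 q \<ge> 0" "r 2 q \<ge> 0" if q: "q \<in> {1..Q}" for q using rnn q by auto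
  have m1: "\<eta> q > 0" "\<alpha>1 q \<ge> 0" "\<alpha>3 q \<ge> 0" "\<alpha>1 q * p12 q - r 1 q - \<eta> q > 0"
     "\<alpha>3 q * p1 q - \<alpha>1 q * (p12 q - p1 q) - 2 * \<eta> q > 0" if q: "q \<in> {1..Q}" for q
  proof -
    have c: "r 1 q / p1 q + r 2 q / p12 q \<le> 1 - \<delta>" using c2[OF q] unfolding p1_def p12_def by simp
    note mm = margins[OF pq(1,3,5,2,4)[OF q] rq[OF q] d c pm_def \<beta>_def \<eta>_def \<alpha>1_def \<alpha>2_def \<alpha>3_def]
    show "\<eta> q > 0" "\<alpha>1 q \<ge> 0" "\<alpha>3 q \<ge> 0" "\<alpha>1 q * p12 q - r 1 q - \<eta> q > 0"
     "\<alpha>3 q * p1 q - \<alpha>1 q * (p12 q - p1 q) - 2 * \<eta> q > 0" by (rule mm)+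
  qed
  have m2: "\<alpha>2 q \<ge> 0" "\<alpha>2 q * p12 q - r 2 q - \<eta> q > 0"
     "\<alpha>3 q * p2 q - \<alpha>2 q * (p12 q - p2 q) - 2 * \<eta> q > 0" if q: "q \<in> {1..Q}" for q
  proof -
    have c: "r 2 q / p2 q + r 1 q / p12 q \<le> 1 - \<delta>" using c1[OF q] unfolding p2_def p12_def by simp
    have h: "pm q = min (p2 q) (p1 q)" "\<alpha>3 q = 1 - \<alpha>2 q - \<alpha>1 q" unfolding pm_def \<alpha>3_def by auto
    note mm = margins[OF pq(2,4,5,1,3)[OF q] rq(2,1)[OF q] d c h(1) \<beta>_def \<eta>_def \<alpha>2_def \<alpha>1_def h(2)]
    show "\<alpha>2 q \<ge> 0" "\<alpha>2 q * p12 q - r 2 q - \<eta> q > 0"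
     "\<alpha>3 q * p2 q - \<alpha>2 q * (p12 q - p2 q) - 2 * \<eta> q > 0" by (rule mm)+
  qed
  have Lsum: "L1 n q + L2 n q + L3 n q \<le> n" if q: "q \<in> {1..Q}" for n q
  proof -
    have "real (L1 n q) \<le> real n * \<alpha>1 q" "real (L2 n q) \<le> real n * \<alpha>2 q" "real (L3 n q) \<le> real n * \<alpha>3 q"
      unfolding L1_def L2_def L3_def using floor_bounds(2) m1[OF q] m2[OF q] by auto
    moreover have "real n * \<alpha>1 q + real n * \<alpha>2 q + real n * \<alpha>3 q = real n"
      unfolding \<alpha>3_def by (simp add: algebra_simps)
    ultimately have "real (L1 n q + L2 n q + L3 n q) \<le> real n" by simp
    then show ?thesis by linarith
  qed
  have TTsub: "TT n q ! i \<subseteq> {..<n}" if q: "q \<in> {1..Q}" and i: "i < 6" for n q i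
  proof -
    have "i \<in> {0,1,2,3,4,5}" using i by auto
    then show ?thesis using Lsum[OF q, of n] unfolding TT_def by auto
  qed
  have bad_le: "measure_pmf.prob (PN n) {ns. \<not> good n ns}
      \<le> (\<Sum>x\<in>{1..Q} \<times> {..<6::nat}. 2 * exp (- 2 * (real n * \<eta> (fst x))\<^sup>2 / real n))"
    if n: "n > 0" for n
  proof -
    have "{ns. \<not> good n ns} = (\<Union>x\<in>{1..Q} \<times> {..<6}. {ns. real n * \<eta> (fst x) \<le> dev n (fst x) (snd x) ns})"
      unfolding good_def by (simp add: not_less set_eq_iff) force
    then have "measure_pmf.prob (PN n) {ns. \<not> good n ns}
        = measure_pmf.prob (PN n) (\<Union>x\<in>{1..Q} \<times> {..<6}. {ns. real n * \<eta> (fst x) \<le> dev n (fst x) (snd x) ns})"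
      by simp
    also have "\<dots> \<le> (\<Sum>x\<in>{1..Q} \<times> {..<6::nat}. measure_pmf.prob (PN n) {ns. real n * \<eta> (fst x) \<le> dev n (fst x) (snd x) ns})"
      by (rule measure_pmf.finite_measure_subadditive_finite) auto
    also have "\<dots> \<le> (\<Sum>x\<in>{1..Q} \<times> {..<6::nat}. 2 * exp (- 2 * (real n * \<eta> (fst x))\<^sup>2 / real n))"
    proof (rule sum_mono)
      fix x :: "nat \<times> nat" assume x: "x \<in> {1..Q} \<times> {..<6}"
      have e: "real n * \<eta> (fst x) > 0" using n m1(1)[of "fst x"] x by auto
      show "measure_pmf.prob (PN n) {ns. real n * \<eta> (fst x) \<le> dev n (fst x) (snd x) ns}
          \<le> 2 * exp (- 2 * (real n * \<eta> (fst x))\<^sup>2 / real n)"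
        unfolding PN_def dev_def by (rule conc[OF TTsub e]) (use x in auto)
    qed
    finally show ?thesis .
  qed
  have lim: "(\<lambda>n. \<Sum>x\<in>{1..Q} \<times> {..<6::nat}. 2 * exp (- 2 * (real n * \<eta> (fst x))\<^sup>2 / real n)) \<longlonglongrightarrow> 0"
    by (rule tendsto_null_sum) (use exp_lim m1(1) in auto)
  define cond where "cond n \<longleftrightarrow> (\<forall>q\<in>{1..Q}.
      1 + p12 q \<le> real n * (\<alpha>1 q * p12 q - r 1 q - \<eta> q) \<and>
      p1 q \<le> real n * (\<alpha>3 q * p1 q - \<alpha>1 q * (p12 q - p1 q) - 2 * \<eta> q) \<and>
      1 + p12 q \<le> real n * (\<alpha>2 q * p12 q - r 2 q - \<eta> q) \<and>
      p2 q \<le> real n * (\<alpha>3 q * p2 q - \<alpha>2 q * (p12 q - p2 q) - 2 * \<eta> q))" for n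
  have ev: "eventually cond sequentially"
    unfolding cond_def
  proof (intro eventually_ball_finite ballI eventually_conj)
    fix q assume q: "q \<in> {1..Q}"
    show "\<forall>\<^sub>F n in sequentially. 1 + p12 q \<le> real n * (\<alpha>1 q * p12 q - r 1 q - \<eta> q)"
      by (rule eventually_lin) (rule m1(4)[OF q])
    show "\<forall>\<^sub>F n in sequentially. p1 q \<le> real n * (\<alpha>3 q * p1 q - \<alpha>1 q * (p12 q - p1 q) - 2 * \<eta> q)"
      by (rule eventually_lin) (rule m1(5)[OF q])
    show "\<forall>\<^sub>F n in sequentially. 1 + p12 q \<le> real n * (\<alpha>2 q * p12 q - r 2 q - \<eta> q)"
      by (rule eventually_lin) (rule m2(2)[OF q])
    show "\<forall>\<^sub>F n in sequentially. p2 q \<le> real n * (\<alpha>3 q * p2 q - \<alpha>2 q * (p12 q - p2 q) - 2 * \<eta> q)"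
      by (rule eventually_lin) (rule m2(3)[OF q])
  qed simp
  have cc: "k 1 n q \<le> card {t\<in>{0..<L1 n q}. q \<le> ns t 1 \<or> q \<le> ns t 2} \<and>
     card {t\<in>{0..<L1 n q}. \<not> q \<le> ns t 1 \<and> q \<le> ns t 2}
       \<le> card {t\<in>{L1 n q + L2 n q..<L1 n q + L2 n q + L3 n q}. q \<le> ns t 1} \<and>
     k 2 n q \<le> card {t\<in>{L1 n q..<L1 n q + L2 n q}. q \<le> ns t 1 \<or> q \<le> ns t 2} \<and>
     card {t\<in>{L1 n q..<L1 n q + L2 n q}. \<not> q \<le> ns t 2 \<and> q \<le> ns t 1}
       \<le> card {t\<in>{L1 n q + L2 n q..<L1 n q + L2 n q + L3 n q}. q \<le> ns t 2}"
    if cn: "cond n" and g: "good n ns" and q: "q \<in> {1..Q}" for n ns q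
  proof -
    have gi: "dev n q i ns < real n * \<eta> q" if "i < 6" for i using g q that unfolding good_def by auto
    define c0 where "c0 = card {t\<in>{0..<L1 n q}. q \<le> ns t 1 \<or> q \<le> ns t 2}"
    define c1 where "c1 = card {t\<in>{0..<L1 n q}. \<not> q \<le> ns t 1 \<and> q \<le> ns t 2}"
    define c2 where "c2 = card {t\<in>{L1 n q..<L1 n q + L2 n q}. q \<le> ns t 1 \<or> q \<le> ns t 2}"
    define c3 where "c3 = card {t\<in>{L1 n q..<L1 n q + L2 n q}. \<not> q \<le> ns t 2 \<and> q \<le> ns t 1}"
    define c4 where "c4 = card {t\<in>{L1 n q + L2 n q..<L1 n q + L2 n q + L3 n q}. q \<le> ns t 1}"
    define c5 where "c5 = card {t\<in>{L1 n q + L2 n q..<L1 n q + L2 n q + L3 n q}. q \<le> ns t 2}"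
    have g0: "\<bar>real c0 - real (L1 n q) * p12 q\<bar> < real n * \<eta> q"
      using gi[of 0] unfolding dev_def TT_def AA_def c0_def by (simp add: p12_def)
    have g1: "\<bar>real c1 - real (L1 n q) * (p12 q - p1 q)\<bar> < real n * \<eta> q"
      using gi[of 1] pd1[of q] unfolding dev_def TT_def AA_def c1_def by simp
    have g2: "\<bar>real c2 - real (L2 n q) * p12 q\<bar> < real n * \<eta> q"
      using gi[of 2] unfolding dev_def TT_def AA_def c2_def by (simp add: p12_def)
    have g3: "\<bar>real c3 - real (L2 n q) * (p12 q - p2 q)\<bar> < real n * \<eta> q"
      using gi[of 3] pd2[of q] unfolding dev_def TT_def AA_def c3_def by simp
    have g4: "\<bar>real c4 - real (L3 n q) * p1 q\<bar> < real n * \<eta> q"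
      using gi[of 4] unfolding dev_def TT_def AA_def c4_def by (simp add: p1_def)
    have g5: "\<bar>real c5 - real (L3 n q) * p2 q\<bar> < real n * \<eta> q"
      using gi[of 5] unfolding dev_def TT_def AA_def c5_def by (simp add: p2_def)
    have fl1: "real n * \<alpha>1 q - 1 \<le> real (L1 n q)" "real (L1 n q) \<le> real n * \<alpha>1 q"
      unfolding L1_def using floor_bounds m1(2)[OF q] by auto
    have fl2: "real n * \<alpha>2 q - 1 \<le> real (L2 n q)" "real (L2 n q) \<le> real n * \<alpha>2 q"
      unfolding L2_def using floor_bounds m2(1)[OF q] by auto
    have fl3: "real n * \<alpha>3 q - 1 \<le> real (L3 n q)"
      unfolding L3_def using floor_bounds m1(3)[OF q] by auto
    have ck1: "real (k 1 n q) \<le> real n * r 1 q + 1" unfolding k_def using ceil_bound rq(1)[OF q] by auto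
    have ck2: "real (k 2 n q) \<le> real n * r 2 q + 1" unfolding k_def using ceil_bound rq(2)[OF q] by auto
    have cq: "1 + p12 q \<le> real n * (\<alpha>1 q * p12 q - r 1 q - \<eta> q)"
      "p1 q \<le> real n * (\<alpha>3 q * p1 q - \<alpha>1 q * (p12 q - p1 q) - 2 * \<eta> q)"
      "1 + p12 q \<le> real n * (\<alpha>2 q * p12 q - r 2 q - \<eta> q)"
      "p2 q \<le> real n * (\<alpha>3 q * p2 q - \<alpha>2 q * (p12 q - p2 q) - 2 * \<eta> q)"
      using cn q unfolding cond_def by auto
    have h0: "real (L1 n q) * p12 q - real n * \<eta> q < real c0" using g0 unfolding abs_less_iff by linarith
    have h1: "real c1 < real (L1 n q) * (p12 q - p1 q) + real n * \<eta> q" using g1 unfolding abs_less_iff by linarith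
    have h2: "real (L2 n q) * p12 q - real n * \<eta> q < real c2" using g2 unfolding abs_less_iff by linarith
    have h3: "real c3 < real (L2 n q) * (p12 q - p2 q) + real n * \<eta> q" using g3 unfolding abs_less_iff by linarith
    have h4: "real (L3 n q) * p1 q - real n * \<eta> q < real c4" using g4 unfolding abs_less_iff by linarith
    have h5: "real (L3 n q) * p2 q - real n * \<eta> q < real c5" using g5 unfolding abs_less_iff by linarith
    have nn: "p12 q - p1 q \<ge> 0" "p12 q \<ge> 0" "p1 q \<ge> 0" "p12 q - p2 q \<ge> 0" "p2 q \<ge> 0"
      using pq[OF q] by auto
    have u1: "real (k 1 n q) \<le> real c0" "real c1 \<le> real c4"
      by (rule det_user[OF fl1 fl3 ck1 h0 h1 h4 nn(1,2,3) cq(1,2)])+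
    have u2: "real (k 2 n q) \<le> real c2" "real c3 \<le> real c5"
      by (rule det_user[OF fl2 fl3 ck2 h2 h3 h5 nn(4,2,5) cq(3,4)])+
    show ?thesis using u1 u2 unfolding c0_def c1_def c2_def c3_def c4_def c5_def of_nat_le_iff by simp
  qed
  have embp: "emb u n ` {..<M u n} \<subseteq> (\<Pi>\<^sub>E x\<in>I u n. (UNIV::'f set)) \<and> inj_on (emb u n) {..<M u n}"
    if u: "u \<in> {1,2}" for u n
  proof -
    have finI: "finite (I u n)" unfolding I_def by auto
    have cI: "card (I u n) = (\<Sum>q\<in>{1..Q}. k u n q)" unfolding I_def by simp
    have "real n * R' u \<le> real (card (I u n))"
    proof -
      have "real n * R' u = (\<Sum>q\<in>{1..Q}. real n * r u q)" using u unfolding R'_def by (auto simp: sum_distrib_left)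
      also have "\<dots> \<le> (\<Sum>q\<in>{1..Q}. real (k u n q))"
      proof (rule sum_mono)
        fix q assume q: "q \<in> {1..Q}"
        have "0 \<le> real n * r u q" using rnn[OF u q] by simp
        then show "real n * r u q \<le> real (k u n q)" unfolding k_def by (rule ceil_bound(2))
      qed
      also have "\<dots> = real (card (I u n))" using cI by simp
      finally show ?thesis .
    qed
    then have "M u n \<le> card (UNIV::'f set) ^ card (I u n)" unfolding M_def by (rule num_msgs_bound)
    also have "\<dots> = card (\<Pi>\<^sub>E x\<in>I u n. (UNIV::'f set))" using finI by (simp add: card_PiE)
    finally have "card {..<M u n} \<le> card (\<Pi>\<^sub>E x\<in>I u n. (UNIV::'f set))" by simp
    then have "\<exists>f. f ` {..<M u n} \<subseteq> (\<Pi>\<^sub>E x\<in>I u n. (UNIV::'f set)) \<and> inj_on f {..<M u n}"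
      by (intro card_le_inj) (auto intro: finite_PiE finI)
    then show ?thesis unfolding emb_def by (rule someI_ex)
  qed
  have nodec: "dec n kk (past n (chan_output (enc n) w ns kk) (\<lambda>_. None)) (past n ns (\<lambda>_. 0)) = w kk"
    if cn: "cond n" and g: "good n ns" and w: "w \<in> msg_set TYPE('f) 2 n R'" and kk: "kk \<in> {1..2}"
    for n ns w kk
  proof -
    define NS where "NS = past n ns (\<lambda>_. 0::nat)"
    have pp: "past t NS d = past t ns d" if "t \<le> n" for t d
      using that unfolding NS_def past_def by (auto simp: fun_eq_iff)
    have NSt: "NS t = ns t" if "t < n" for t using that unfolding NS_def past_def by simp
    have co: "chan_output (enc n) w' NS kk t = chan_output (enc n) w' ns kk t" if "t < n" for w' t
    proof -
      have h: "chan_input (enc n) w' NS t = chan_input (enc n) w' ns t"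
        unfolding chan_input_def using pp[of t] that by simp
      show ?thesis unfolding chan_output_def by (simp only: h NSt[OF that])
    qed
    define Y where "Y = past n (chan_output (enc n) w ns kk) (\<lambda>_. None)"
    have wY: "past n (chan_output (enc n) w NS kk) (\<lambda>_. None) = Y"
      unfolding Y_def past_def using co by (auto simp: fun_eq_iff)
    define w'' where "w'' = (SOME w'. w' \<in> msg_set TYPE('f) 2 n R'
        \<and> past n (chan_output (enc n) w' NS kk) (\<lambda>_. None) = Y)"
    have w'': "w'' \<in> msg_set TYPE('f) 2 n R' \<and> past n (chan_output (enc n) w'' NS kk) (\<lambda>_. None) = Y"
      unfolding w''_def by (rule someI[of _ w]) (use w wY in auto)
    have decw: "dec n kk Y (past n ns (\<lambda>_. 0)) = w'' kk" unfolding dec_def w''_def NS_def by simp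
    have coeq: "chan_output (enc n) w'' ns kk t = chan_output (enc n) w ns kk t" if t: "t < n" for t
    proof -
      have "past n (chan_output (enc n) w'' NS kk) (\<lambda>_. None) t = Y t" using w'' by simp
      then show ?thesis using t co unfolding Y_def past_def by simp
    qed
    define LXq where "LXq q v = LX 0 (L1 n q) (L1 n q) (L2 n q) (L1 n q + L2 n q) (L3 n q)
        (\<lambda>x. q \<le> ns x 1) (\<lambda>x. q \<le> ns x 2) (k 1 n q) (k 2 n q)
        (\<lambda>j. emb 1 n (v 1) (q, j)) (\<lambda>j. emb 2 n (v 2) (q, j))" for q and v :: "nat \<Rightarrow> nat"
    have causal: "enc n t v (past t ns (\<lambda>_. 0)) q = LXq q v t" for t q v
      unfolding enc_def LXq_def by (rule LX_causal) (auto simp: past_def)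
    have lxeq: "LXq q w'' t = LXq q w t" if t: "t < n" and q1: "1 \<le> q" and qk: "q \<le> ns t kk" for t q
    proof -
      have "chan_output (enc n) w'' ns kk t q = chan_output (enc n) w ns kk t q" using coeq[OF t] by simp
      then have "enc n t w'' (past t ns (\<lambda>_. 0)) q = enc n t w (past t ns (\<lambda>_. 0)) q"
        using q1 qk unfolding chan_output_def chan_input_def by simp
      then show ?thesis using causal by simp
    qed
    have pk: "emb kk n (w'' kk) x = emb kk n (w kk) x" if x: "x \<in> I kk n" for x
    proof -
      obtain q j where xq: "x = (q, j)" and q: "q \<in> {1..Q}" and j: "j < k kk n q"
        using x unfolding I_def by auto
      note c = cc[OF cn g q]
      have q1: "1 \<le> q" using q by simp
      show ?thesis
      proof (cases "kk = 1")
        case True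
        have "emb 1 n (w'' 1) (q, j) = emb 1 n (w 1) (q, j)"
        proof (rule dec_u1[where ?L1.0 = "L1 n q" and ?L2.0 = "L2 n q" and ?L3.0 = "L3 n q" and n = n
              and ?k1.0 = "k 1 n q" and ?k2.0 = "k 2 n q" and ?r1.0 = "\<lambda>x. q \<le> ns x 1"
              and ?r2.0 = "\<lambda>x. q \<le> ns x 2" and a = "\<lambda>j. emb 1 n (w'' 1) (q, j)"
              and a' = "\<lambda>j. emb 1 n (w 1) (q, j)" and b = "\<lambda>j. emb 2 n (w'' 2) (q, j)"
              and b' = "\<lambda>j. emb 2 n (w 2) (q, j)"])
          show "L1 n q + L2 n q + L3 n q \<le> n" by (rule Lsum[OF q])
          show "j < k 1 n q" using j True by simp
          fix t assume "t < n" "q \<le> ns t 1"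
          then show "LX 0 (L1 n q) (L1 n q) (L2 n q) (L1 n q + L2 n q) (L3 n q) (\<lambda>x. q \<le> ns x 1)
             (\<lambda>x. q \<le> ns x 2) (k 1 n q) (k 2 n q) (\<lambda>j. emb 1 n (w'' 1) (q, j))
             (\<lambda>j. emb 2 n (w'' 2) (q, j)) t =
            LX 0 (L1 n q) (L1 n q) (L2 n q) (L1 n q + L2 n q) (L3 n q) (\<lambda>x. q \<le> ns x 1)
             (\<lambda>x. q \<le> ns x 2) (k 1 n q) (k 2 n q) (\<lambda>j. emb 1 n (w 1) (q, j))
             (\<lambda>j. emb 2 n (w 2) (q, j)) t"
            using lxeq[of t q] True q1 unfolding LXq_def by simp
        qed (use c in auto)
        then show ?thesis using True xq by simp
      next
        case False
        then have K2: "kk = 2" using kk by auto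
        have "emb 2 n (w'' 2) (q, j) = emb 2 n (w 2) (q, j)"
        proof (rule dec_u2[where ?L1.0 = "L1 n q" and ?L2.0 = "L2 n q" and ?L3.0 = "L3 n q" and n = n
              and ?k1.0 = "k 1 n q" and ?k2.0 = "k 2 n q" and ?r1.0 = "\<lambda>x. q \<le> ns x 1"
              and ?r2.0 = "\<lambda>x. q \<le> ns x 2" and a = "\<lambda>j. emb 1 n (w'' 1) (q, j)"
              and a' = "\<lambda>j. emb 1 n (w 1) (q, j)" and b = "\<lambda>j. emb 2 n (w'' 2) (q, j)"
              and b' = "\<lambda>j. emb 2 n (w 2) (q, j)"])
          show "L1 n q + L2 n q + L3 n q \<le> n" by (rule Lsum[OF q])
          show "j < k 2 n q" using j K2 by simp
          fix t assume "t < n" "q \<le> ns t 2"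
          then show "LX 0 (L1 n q) (L1 n q) (L2 n q) (L1 n q + L2 n q) (L3 n q) (\<lambda>x. q \<le> ns x 1)
             (\<lambda>x. q \<le> ns x 2) (k 1 n q) (k 2 n q) (\<lambda>j. emb 1 n (w'' 1) (q, j))
             (\<lambda>j. emb 2 n (w'' 2) (q, j)) t =
            LX 0 (L1 n q) (L1 n q) (L2 n q) (L1 n q + L2 n q) (L3 n q) (\<lambda>x. q \<le> ns x 1)
             (\<lambda>x. q \<le> ns x 2) (k 1 n q) (k 2 n q) (\<lambda>j. emb 1 n (w 1) (q, j))
             (\<lambda>j. emb 2 n (w 2) (q, j)) t"
            using lxeq[of t q] K2 q1 unfolding LXq_def by simp
        qed (use c in \<open>auto simp: disj_commute\<close>)
        then show ?thesis using K2 xq by simp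
      qed
    qed
    have kku: "kk \<in> {1,2}" using kk by auto
    note E = embp[OF kku, of n]
    have wk: "w kk \<in> {..<M kk n}" "w'' kk \<in> {..<M kk n}"
      using w w'' kk unfolding msg_set_def M_def by (auto simp: PiE_iff)
    have "emb kk n (w'' kk) = emb kk n (w kk)"
      by (rule PiE_ext[of _ "I kk n" "\<lambda>_. UNIV"]) (use E wk pk in auto)
    then have "w'' kk = w kk" using E wk by (auto dest: inj_onD)
    then show ?thesis using decw unfolding Y_def by simp
  qed
  have err_nn: "0 \<le> error_prob TYPE('f) 2 P n R' (enc n) (dec n)" for n
    unfolding error_prob_def by (intro divide_nonneg_nonneg sum_nonneg) auto
  have err_le: "error_prob TYPE('f) 2 P n R' (enc n) (dec n) \<le> measure_pmf.prob (PN n) {ns. \<not> good n ns}"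
    if cn: "cond n" for n
  proof -
    let ?MS = "msg_set TYPE('f) 2 n R'"
    let ?B = "measure_pmf.prob (PN n) {ns. \<not> good n ns}"
    have fin: "finite ?MS" and ne: "?MS \<noteq> {}" by (rule msg_set_props)+
    have cpos: "real (card ?MS) > 0" using fin ne by (simp add: card_gt_0_iff)
    have each: "measure_pmf.prob (Pi_pmf {..<n} (\<lambda>_. 0) (\<lambda>_. P))
        {ns. \<exists>kk\<in>{1..2}. dec n kk (past n (chan_output (enc n) w ns kk) (\<lambda>_. None)) (past n ns (\<lambda>_. 0)) \<noteq> w kk}
        \<le> ?B" if w: "w \<in> ?MS" for w
      unfolding PN_def
      by (rule measure_pmf.finite_measure_mono) (use nodec[OF cn _ w] in auto)
    have "(\<Sum>w\<in>?MS. measure_pmf.prob (Pi_pmf {..<n} (\<lambda>_. 0) (\<lambda>_. P))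
        {ns. \<exists>kk\<in>{1..2}. dec n kk (past n (chan_output (enc n) w ns kk) (\<lambda>_. None)) (past n ns (\<lambda>_. 0)) \<noteq> w kk})
        \<le> (\<Sum>w\<in>?MS. ?B)" by (rule sum_mono) (rule each)
    also have "\<dots> = real (card ?MS) * ?B" by simp
    finally show ?thesis unfolding error_prob_def using cpos by (simp add: divide_le_eq mult.commute)
  qed
  have "(\<lambda>n. error_prob TYPE('f) 2 P n R' (enc n) (dec n)) \<longlonglongrightarrow> 0"
  proof (rule tendsto_sandwich[OF _ _ tendsto_const lim])
    show "\<forall>\<^sub>F n in sequentially. 0 \<le> error_prob TYPE('f) 2 P n R' (enc n) (dec n)"
      using err_nn by simp
    show "\<forall>\<^sub>F n in sequentially. error_prob TYPE('f) 2 P n R' (enc n) (dec n)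
        \<le> (\<Sum>x\<in>{1..Q} \<times> {..<6::nat}. 2 * exp (- 2 * (real n * \<eta> (fst x))\<^sup>2 / real n))"
      using ev eventually_gt_at_top[of 0]
    proof eventually_elim
      case (elim n)
      then show ?case using err_le[of n] bad_le[of n] by linarith
    qed
  qed
  then show ?thesis unfolding achievable_def R'_def[symmetric] by (auto simp: R'_def)
qed

theorem lemma2:
  fixes P :: "(nat \<Rightarrow> nat) pmf" and Q :: nat and R1 R2 :: real
  assumes "Q \<ge> 1"
    and "valid_state_law 2 Q P"
    and "\<forall>u\<in>{1,2}. \<forall>q\<in>{1..Q}. measure_pmf.prob P {s. s u \<ge> q} > 0"
    and "\<exists>Rq :: nat \<Rightarrow> nat \<Rightarrow> real.
           (\<forall>u\<in>{1,2}. \<forall>q\<in>{1..Q}. Rq u q \<ge> 0) \<and>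
           R1 = (\<Sum>q=1..Q. Rq 1 q) \<and> R2 = (\<Sum>q=1..Q. Rq 2 q) \<and>
           (\<forall>q\<in>{1..Q}.
              max (Rq 1 q / measure_pmf.prob P {s. max (s 1) (s 2) \<ge> q}
                     + Rq 2 q / measure_pmf.prob P {s. s 2 \<ge> q})
                  (Rq 1 q / measure_pmf.prob P {s. s 1 \<ge> q}
                     + Rq 2 q / measure_pmf.prob P {s. max (s 1) (s 2) \<ge> q}) \<le> 1)"
  shows "(\<lambda>k. if k = 1 then R1 else if k = 2 then R2 else 0)
           \<in> capacity_region TYPE('f::{finite,field}) 2 P"
proof -
  obtain Rq :: "nat \<Rightarrow> nat \<Rightarrow> real" where
    Rnn: "\<forall>u\<in>{1,2}. \<forall>q\<in>{1..Q}. Rq u q \<ge> 0" and R1: "R1 = (\<Sum>q=1..Q. Rq 1 q)"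
    and R2: "R2 = (\<Sum>q=1..Q. Rq 2 q)"
    and mx: "\<forall>q\<in>{1..Q}.
              max (Rq 1 q / measure_pmf.prob P {s. max (s 1) (s 2) \<ge> q}
                     + Rq 2 q / measure_pmf.prob P {s. s 2 \<ge> q})
                  (Rq 1 q / measure_pmf.prob P {s. s 1 \<ge> q}
                     + Rq 2 q / measure_pmf.prob P {s. max (s 1) (s 2) \<ge> q}) \<le> 1"
    using assms(4) by blast
  have mxset: "{s::nat\<Rightarrow>nat. max (s 1) (s 2) \<ge> q} = {s. q \<le> s 1 \<or> q \<le> s 2}" for q
    by auto
  show ?thesis unfolding capacity_region_def convex_closure_K_def
  proof (intro CollectI conjI allI impI)
    fix k :: nat assume "k \<notin> {1..2}"
    then show "(if k = 1 then R1 else if k = 2 then R2 else 0) = 0" by auto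
  next
    fix \<epsilon> :: real assume e: "\<epsilon> > 0"
    define \<delta> where "\<delta> = min (1/2) (\<epsilon> / (\<bar>R1\<bar> + \<bar>R2\<bar> + 1))"
    have d: "\<delta> > 0" "\<delta> \<le> 1/2"
    proof -
      have "\<bar>R1\<bar> + \<bar>R2\<bar> + 1 > 0" by (simp add: add_nonneg_pos)
      then show "\<delta> > 0" using e unfolding \<delta>_def by simp
      show "\<delta> \<le> 1/2" unfolding \<delta>_def by (rule min.cobounded1)
    qed
    have d3: "\<delta> * (\<bar>R1\<bar> + \<bar>R2\<bar> + 1) \<le> \<epsilon>"
    proof -
      have "\<delta> \<le> \<epsilon> / (\<bar>R1\<bar> + \<bar>R2\<bar> + 1)" unfolding \<delta>_def by simp
      then show ?thesis by (simp add: pos_le_divide_eq)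
    qed
    define r where "r u q = (1 - \<delta>) * Rq u q" for u q
    have A: "achievable TYPE('f) 2 P
       (\<lambda>k. if k = 1 then (\<Sum>q=1..Q. r 1 q) else if k = 2 then (\<Sum>q=1..Q. r 2 q) else 0)"
    proof (rule ach[where \<delta> = \<delta>])
      show "\<And>u q. u \<in> {1, 2} \<Longrightarrow> q \<in> {1..Q} \<Longrightarrow> 0 < measure_pmf.prob P {s. q \<le> s u}"
        using assms(3) by auto
      show "\<And>u q. u \<in> {1, 2} \<Longrightarrow> q \<in> {1..Q} \<Longrightarrow> 0 \<le> r u q"
        unfolding r_def using Rnn d by auto
      show "0 < \<delta>" by (rule d)
    next
      fix q assume q: "q \<in> {1..Q}"
      have m: "Rq 1 q / measure_pmf.prob P {s. q \<le> s 1 \<or> q \<le> s 2} + Rq 2 q / measure_pmf.prob P {s. q \<le> s 2} \<le> 1"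
        "Rq 1 q / measure_pmf.prob P {s. q \<le> s 1} + Rq 2 q / measure_pmf.prob P {s. q \<le> s 1 \<or> q \<le> s 2} \<le> 1"
        using mx q unfolding mxset by auto
      have "r 1 q / measure_pmf.prob P {s. q \<le> s 1 \<or> q \<le> s 2} + r 2 q / measure_pmf.prob P {s. q \<le> s 2}
          = (1 - \<delta>) * (Rq 1 q / measure_pmf.prob P {s. q \<le> s 1 \<or> q \<le> s 2} + Rq 2 q / measure_pmf.prob P {s. q \<le> s 2})"
        unfolding r_def by (simp add: algebra_simps)
      also have "\<dots> \<le> (1 - \<delta>) * 1" using m(1) d by (intro mult_left_mono) auto
      finally show "r 1 q / measure_pmf.prob P {s. q \<le> s 1 \<or> q \<le> s 2} + r 2 q / measure_pmf.prob P {s. q \<le> s 2} \<le> 1 - \<delta>"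
        by simp
      have "r 1 q / measure_pmf.prob P {s. q \<le> s 1} + r 2 q / measure_pmf.prob P {s. q \<le> s 1 \<or> q \<le> s 2}
          = (1 - \<delta>) * (Rq 1 q / measure_pmf.prob P {s. q \<le> s 1} + Rq 2 q / measure_pmf.prob P {s. q \<le> s 1 \<or> q \<le> s 2})"
        unfolding r_def by (simp add: algebra_simps)
      also have "\<dots> \<le> (1 - \<delta>) * 1" using m(2) d by (intro mult_left_mono) auto
      finally show "r 1 q / measure_pmf.prob P {s. q \<le> s 1} + r 2 q / measure_pmf.prob P {s. q \<le> s 1 \<or> q \<le> s 2} \<le> 1 - \<delta>"
        by simp
    qed
    have s1: "(\<Sum>q=1..Q. r 1 q) = (1 - \<delta>) * R1" unfolding r_def R1 by (simp add: sum_distrib_left)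
    have s2: "(\<Sum>q=1..Q. r 2 q) = (1 - \<delta>) * R2" unfolding r_def R2 by (simp add: sum_distrib_left)
    define R' :: "nat \<Rightarrow> real" where
      "R' = (\<lambda>k. if k = 1 then (\<Sum>q=1..Q. r 1 q) else if k = 2 then (\<Sum>q=1..Q. r 2 q) else 0)"
    have close: "\<bar>(if k = 1 then R1 else if k = 2 then R2 else 0) - R' k\<bar> < \<epsilon>" if k: "k \<in> {1..2}" for k
    proof -
      have "\<delta> * \<bar>R1\<bar> < \<epsilon>" "\<delta> * \<bar>R2\<bar> < \<epsilon>"
      proof -
        have "\<delta> * \<bar>R1\<bar> \<ge> 0" "\<delta> * \<bar>R2\<bar> \<ge> 0" using d(1) by auto
        moreover have "\<delta> + (\<delta> * \<bar>R1\<bar> + \<delta> * \<bar>R2\<bar>) \<le> \<epsilon>" using d3 by (simp add: algebra_simps)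
        ultimately show "\<delta> * \<bar>R1\<bar> < \<epsilon>" "\<delta> * \<bar>R2\<bar> < \<epsilon>" using d(1) by linarith+
      qed
      moreover have "\<bar>R1 - (1 - \<delta>) * R1\<bar> = \<delta> * \<bar>R1\<bar>" "\<bar>R2 - (1 - \<delta>) * R2\<bar> = \<delta> * \<bar>R2\<bar>"
        using d by (auto simp: algebra_simps abs_mult)
      ultimately show ?thesis using k unfolding R'_def s1 s2 by auto
    qed
    show "\<exists>(m::nat) (c::nat\<Rightarrow>real) (r::nat\<Rightarrow>nat\<Rightarrow>real). (\<forall>i<m. 0 \<le> c i \<and> r i \<in> {R. achievable TYPE('f) 2 P R}) \<and>
            (\<Sum>i<m. c i) = 1 \<and>
            (\<forall>k\<in>{1..2}. \<bar>(if k = 1 then R1 else if k = 2 then R2 else 0) - (\<Sum>i<m. c i * r i k)\<bar> < \<epsilon>)"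
    proof (intro exI[where x="1::nat"] exI[where x="\<lambda>_::nat. 1::real"] exI[where x="\<lambda>_::nat. R'"] conjI ballI allI impI)
      show "(\<Sum>i<1::nat. 1::real) = 1" by simp
    next
      fix i :: nat assume "i < 1"
      show "(0::real) \<le> 1" by simp
      show "R' \<in> {R. achievable TYPE('f) 2 P R}" using A unfolding R'_def by simp
    next
      fix k :: nat assume k: "k \<in> {1..2}"
      show "\<bar>(if k = 1 then R1 else if k = 2 then R2 else 0) - (\<Sum>i<1::nat. 1 * R' k)\<bar> < \<epsilon>"
        using close[OF k] by simp
    qed
  qed
qed

end
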